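(* If the formal deformations $(\{\cdot,\cdot\}^{[a,b,c]}_n)_{n\ge0}$ and $(\{\cdot,\cdot\}^{[a',b',c']}_n)_{n\ge0}$ of $\widetilde J$ are modular-isomorphic, then $c=c'$ and there exists $\xi\in\mathbb{C}^*$ such that $a'=\xi a$ and $b'=\xi^{-1}b$.
   Context: Let $\widetilde J=\mathbb{C}[E_4,E_6,A,B]$ be the polynomial algebra in four algebraically independent variables, bigraded by weight and index, where $E_4$ has weight $4$ and index $0$, $E_6$ has weight $6$ and index $0$, $A$ has weight $-2$ and index $1$, $B$ has weight $0$ and index $1$; $\widetilde J_{k,p}$ denotes the homogeneous component of weight $k$ and index $p$. For $(a,b)\in\mathbb{C}^2$, $S_{a,b}$ is the derivation of $\widetilde J$ with $S_{a,b}(E_4)=-\tfrac13E_6$, $S_{a,b}(E_6)=-\tfrac12E_4^2$, $S_{a,b}(A)=aB$, $S_{a,b}(B)=bE_4A$. For $c\in\mathbb{C}$ and $n\ge0$, $\{\cdot,\cdot\}^{[a,b,c]}_n$ is the bilinear map on $\widetilde J$ defined on homogeneous $f\in\widetilde J_{k,p}$, $g\in\widetilde J_{\ell,q}$ by $\{f,g\}^{[a,b,c]}_n=\sum_{r=0}^n(-1)^r\binom{k+cp+n-1}{n-r}\binom{\ell+cq+n-1}{r}S_{a,b}^r(f)\,S_{a,b}^{n-r}(g)$ (complex binomial coefficients). Two such formal deformations $(\{\cdot,\cdot\}^{[a,b,c]}_n)_n$ and $(\{\cdot,\cdot\}^{[a',b',c']}_n)_n$ are modular-isomorphic if there is a $\mathbb{C}$-linear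 bijection $\phi:\widetilde J\to\widetilde J$ mapping each $\widetilde J_{k,p}$ into $\widetilde J_{k,p}$ and such that $\phi(\{f,g\}^{[a,b,c]}_j)=\{\phi(f),\phi(g)\}^{[a',b',c']}_j$ for all $j\ge0$ and $f,g\in\widetilde J$. *)

theory Defs
  imports Complex_Main "HOL-Library.Poly_Mapping"
begin

text \<open>The polynomial algebra C[E4,E6,A,B]: finitely supported maps from
  monomials (exponent vectors over the four generators) to complex coefficients,
  with the convolution product of Poly_Mapping.\<close>

datatype gen = E4 | E6 | GA | GB

type_synonym monom = "gen \<Rightarrow>\<^sub>0 nat"
type_synonym J = "monom \<Rightarrow>\<^sub>0 complex"

definition var :: "gen \<Rightarrow> J" where
  "var v = Poly_Mapping.single (Poly_Mapping.single v 1) 1"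

definition const :: "complex \<Rightarrow> J" where
  "const c = Poly_Mapping.single 0 c"

definition mweight :: "monom \<Rightarrow> int" where
  "mweight m = 4 * int (Poly_Mapping.lookup m E4) + 6 * int (Poly_Mapping.lookup m E6) - 2 * int (Poly_Mapping.lookup m GA)"

definition mindex :: "monom \<Rightarrow> int" where
  "mindex m = int (Poly_Mapping.lookup m GA) + int (Poly_Mapping.lookup m GB)"

definition Jcomp :: "int \<Rightarrow> int \<Rightarrow> J set" where
  "Jcomp k p = {f. \<forall>m \<in> Poly_Mapping.keys f. mweight m = k \<and> mindex m = p}"

definition hpart :: "int \<Rightarrow> int \<Rightarrow> J \<Rightarrow> J" where
  "hpart k p f = (\<Sum>m \<in> {m \<in> Poly_Mapping.keys f. mweight m = k \<and> mindex m = p}.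
                    Poly_Mapping.single m (Poly_Mapping.lookup f m))"

definition bidegs :: "J \<Rightarrow> (int \<times> int) set" where
  "bidegs f = (\<lambda>m. (mweight m, mindex m)) ` Poly_Mapping.keys f"

definition Sgen :: "complex \<Rightarrow> complex \<Rightarrow> gen \<Rightarrow> J" where
  "Sgen a b v = (case v of
      E4 \<Rightarrow> const (-1/3) * var E6
    | E6 \<Rightarrow> const (-1/2) * var E4 * var E4
    | GA \<Rightarrow> const a * var GB
    | GB \<Rightarrow> const b * var E4 * var GA)"

definition Smon :: "complex \<Rightarrow> complex \<Rightarrow> monom \<Rightarrow> J" where
  "Smon a b m = (\<Sum>v \<in> {E4, E6, GA, GB}.
      const (of_nat (Poly_Mapping.lookup m v)) * Poly_Mapping.single (m - Poly_Mapping.single v 1) 1 * Sgen a b v)"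

definition S :: "complex \<Rightarrow> complex \<Rightarrow> J \<Rightarrow> J" where
  "S a b f = (\<Sum>m \<in> Poly_Mapping.keys f. const (Poly_Mapping.lookup f m) * Smon a b m)"

text \<open>the bracket on homogeneous elements f in J_{k,p}, g in J_{l,q}\<close>
definition hbracket :: "complex \<Rightarrow> complex \<Rightarrow> complex \<Rightarrow> nat \<Rightarrow>
    int \<Rightarrow> int \<Rightarrow> J \<Rightarrow> int \<Rightarrow> int \<Rightarrow> J \<Rightarrow> J" where
  "hbracket a b c n k p f l q g =
     (\<Sum>r\<le>n. const ((-1) ^ r
        * ((of_int k + c * of_int p + of_nat n - 1) gchoose (n - r))
        * ((of_int l + c * of_int q + of_nat n - 1) gchoose r))
        * (S a b ^^ r) f * (S a b ^^ (n - r)) g)"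

definition bracket :: "complex \<Rightarrow> complex \<Rightarrow> complex \<Rightarrow> nat \<Rightarrow> J \<Rightarrow> J \<Rightarrow> J" where
  "bracket a b c n f g =
     (\<Sum>(k,p) \<in> bidegs f. \<Sum>(l,q) \<in> bidegs g.
        hbracket a b c n k p (hpart k p f) l q (hpart l q g))"

definition modular_isomorphic ::
    "complex \<Rightarrow> complex \<Rightarrow> complex \<Rightarrow> complex \<Rightarrow> complex \<Rightarrow> complex \<Rightarrow> bool" where
  "modular_isomorphic a b c a' b' c' \<longleftrightarrow>
     (\<exists>\<phi> :: J \<Rightarrow> J.
        (\<forall>x y. \<phi> (x + y) = \<phi> x + \<phi> y) \<and>
        (\<forall>s x. \<phi> (const s * x) = const s * \<phi> x) \<and>
        bij \<phi> \<and>
        (\<forall>k p. \<phi> ` Jcomp k p \<subseteq> Jcomp k p) \<and>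
        (\<forall>j f g. \<phi> (bracket a b c j f g) = bracket a' b' c' j (\<phi> f) (\<phi> g)))"

end

theory Submission
  imports Defs
begin

lemma mon_eq: "(m::monom) = m' \<longleftrightarrow> Poly_Mapping.lookup m E4 = Poly_Mapping.lookup m' E4 \<and> Poly_Mapping.lookup m E6 = Poly_Mapping.lookup m' E6
   \<and> Poly_Mapping.lookup m GA = Poly_Mapping.lookup m' GA \<and> Poly_Mapping.lookup m GB = Poly_Mapping.lookup m' GB"
  apply (rule iffI, simp)
  apply (rule poly_mapping_eqI)
  subgoal for k by (cases k) auto
  done

lemma const_mult: "const s * const t = const (s * t)"
  by (simp add: const_def mult_single)
lemma const_one: "const 1 = 1" by (simp add: const_def)
lemma const_zero: "const 0 = 0" by (simp add: const_def)
lemma const_var: "const s * var v = Poly_Mapping.single (Poly_Mapping.single v 1) s"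
  by (simp add: const_def var_def mult_single)

lemma Smon_var: "Smon a b (Poly_Mapping.single v 1) = Sgen a b v"
  unfolding Smon_def
  by (cases v) (simp_all add: lookup_single when_def const_zero const_one)

lemma S_single: "S a b (Poly_Mapping.single m t) = const t * Smon a b m"
  unfolding S_def by (simp add: const_zero)

lemma S_var: "S a b (const s * var v) = const s * Sgen a b v"
  by (simp add: const_var S_single Smon_var[simplified])

lemma bidegs_single: "t \<noteq> 0 \<Longrightarrow> bidegs (Poly_Mapping.single m t) = {(mweight m, mindex m)}"
  unfolding bidegs_def by simp

lemma hpart_single: assumes "t \<noteq> 0" shows "hpart (mweight m) (mindex m) (Poly_Mapping.single m t) = Poly_Mapping.single m t"
proof -
  have "{x \<in> Poly_Mapping.keys (Poly_Mapping.single m t). mweight x = mweight m \<and> mindex x = mindex m} = {m}"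
    using assms by auto
  then show ?thesis unfolding hpart_def by simp
qed

lemma bracket_single: "s \<noteq> 0 \<Longrightarrow> t \<noteq> 0 \<Longrightarrow> bracket a b c n (Poly_Mapping.single m s) (Poly_Mapping.single m' t)
   = hbracket a b c n (mweight m) (mindex m) (Poly_Mapping.single m s) (mweight m') (mindex m') (Poly_Mapping.single m' t)"
  unfolding bracket_def by (simp add: bidegs_single hpart_single)

lemma bracket0: "s \<noteq> 0 \<Longrightarrow> t \<noteq> 0 \<Longrightarrow> bracket a b c 0 (Poly_Mapping.single m s) (Poly_Mapping.single m' t)
   = Poly_Mapping.single m s * Poly_Mapping.single m' t"
  by (simp add: bracket_single hbracket_def const_one)

definition K :: "complex \<Rightarrow> gen \<Rightarrow> complex" where
  "K c v = of_int (mweight (Poly_Mapping.single v 1)) + c * of_int (mindex (Poly_Mapping.single v 1))"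

lemma bracket1: "s \<noteq> 0 \<Longrightarrow> t \<noteq> 0 \<Longrightarrow> bracket a b c 1 (const s * var v) (const t * var w)
   = const (K c v) * (const s * var v) * (const t * Sgen a b w)
     + const (- K c w) * (const s * Sgen a b v) * (const t * var w)"
  unfolding const_var
  apply (simp add: bracket_single hbracket_def const_one)
  apply (simp add: S_single Smon_var[simplified] K_def const_var[symmetric] algebra_simps)
  done

lemma Jcomp_single:
  assumes "f \<in> Jcomp k p" "\<And>m. mweight m = k \<Longrightarrow> mindex m = p \<Longrightarrow> m = m0"
  shows "f = Poly_Mapping.single m0 (Poly_Mapping.lookup f m0)"
proof (rule poly_mapping_eqI)
  fix x
  show "Poly_Mapping.lookup f x = Poly_Mapping.lookup (Poly_Mapping.single m0 (Poly_Mapping.lookup f m0)) x"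
  proof (cases "x = m0")
    case True then show ?thesis by simp
  next
    case False
    have "x \<notin> Poly_Mapping.keys f"
      using assms False unfolding Jcomp_def by blast
    then show ?thesis using False by (simp add: in_keys_iff lookup_single)
  qed
qed

lemma mon_unique:
  assumes "mweight m = mweight (Poly_Mapping.single v 1)" "mindex m = mindex (Poly_Mapping.single v 1)"
  shows "m = Poly_Mapping.single v 1"
  using assms
  apply (cases v) 
  apply (auto simp: mweight_def mindex_def mon_eq lookup_single when_def)
  apply presburger+
  done

lemma var_Jcomp: "var v \<in> Jcomp (mweight (Poly_Mapping.single v 1)) (mindex (Poly_Mapping.single v 1))"
  by (simp add: var_def Jcomp_def)


abbreviation sg :: "monom \<Rightarrow> complex \<Rightarrow> J" where "sg \<equiv> Poly_Mapping.single"
abbreviation ee :: "gen \<Rightarrow> monom" where "ee v \<equiv> Poly_Mapping.single v 1"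

theorem mainTheorem3:
  fixes a b c a' b' c' :: complex
  assumes "modular_isomorphic a b c a' b' c'"
  shows "c = c' \<and> (\<exists>\<xi>. \<xi> \<noteq> 0 \<and> a' = \<xi> * a \<and> b' = inverse \<xi> * b)"
proof -
  obtain \<phi> :: "J \<Rightarrow> J" where add: "\<And>x y. \<phi> (x + y) = \<phi> x + \<phi> y"
    and sm: "\<And>s x. \<phi> (const s * x) = const s * \<phi> x" and bj: "bij \<phi>"
    and comp: "\<And>k p. \<phi> ` Jcomp k p \<subseteq> Jcomp k p"
    and br: "\<And>j f g. \<phi> (bracket a b c j f g) = bracket a' b' c' j (\<phi> f) (\<phi> g)"
    using assms unfolding modular_isomorphic_def by (elim exE conjE) (rule that; assumption?; blast)
  have phi0: "\<phi> 0 = 0" using add[of 0 0] by simp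
  have inj: "inj \<phi>" using bj bij_is_inj by blast
  have ex: "\<forall>v. \<exists>l. l \<noteq> 0 \<and> \<phi> (var v) = sg (ee v) l"
  proof
    fix v
    have "\<phi> (var v) \<in> Jcomp (mweight (ee v)) (mindex (ee v))"
      using comp[of "mweight (ee v)" "mindex (ee v)"] var_Jcomp[of v] by (rule subsetD[OF _ imageI])
    then have e: "\<phi> (var v) = sg (ee v) (Poly_Mapping.lookup (\<phi> (var v)) (ee v))"
      by (rule Jcomp_single) (erule (1) mon_unique)
    moreover have "Poly_Mapping.lookup (\<phi> (var v)) (ee v) \<noteq> 0"
    proof
      assume "Poly_Mapping.lookup (\<phi> (var v)) (ee v) = 0"
      then have "\<phi> (var v) = \<phi> 0" using e phi0 by simp
      then have "var v = 0" using inj by (simp add: inj_eq)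
      moreover have "Poly_Mapping.lookup (var v) (ee v) = 1" by (simp add: var_def)
      ultimately show False by simp
    qed
    ultimately show "\<exists>l. l \<noteq> 0 \<and> \<phi> (var v) = sg (ee v) l" by blast
  qed
  obtain lam where lamx: "\<forall>v. lam v \<noteq> 0 \<and> \<phi> (var v) = sg (ee v) (lam v)"
    using choice[OF ex] by blast
  have lam: "\<And>v. lam v \<noteq> 0" "\<And>v. \<phi> (var v) = sg (ee v) (lam v)" using lamx by auto
  have phs: "\<phi> (sg M s) = const s * \<phi> (sg M 1)" for M s
    using sm[of s "sg M 1"] by (simp add: const_def mult_single)
  have mult: "\<phi> (sg (m + m') 1) = sg (m + m') (u * w)"
    if "\<phi> (sg m 1) = sg m u" "\<phi> (sg m' 1) = sg m' w" "u \<noteq> 0" "w \<noteq> 0" for m m' u w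
  proof -
    have "\<phi> (bracket a b c 0 (sg m 1) (sg m' 1)) = bracket a' b' c' 0 (sg m u) (sg m' w)"
      using br that by simp
    then show ?thesis using that by (simp add: bracket0 mult_single)
  qed
  have pv: "\<phi> (sg (ee v) 1) = sg (ee v) (lam v)" for v using lam(2)[of v] by (simp add: var_def)
  have p44: "\<phi> (sg (ee E4 + ee E4) 1) = sg (ee E4 + ee E4) (lam E4 * lam E4)"
    by (rule mult[OF pv pv lam(1) lam(1)])
  have p444: "\<phi> (sg (ee E4 + ee E4 + ee E4) 1) = sg (ee E4 + ee E4 + ee E4) (lam E4 * lam E4 * lam E4)"
    by (rule mult[OF p44 pv]) (use lam(1) in auto)
  have p66: "\<phi> (sg (ee E6 + ee E6) 1) = sg (ee E6 + ee E6) (lam E6 * lam E6)"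
    by (rule mult[OF pv pv lam(1) lam(1)])
  have pvar: "\<phi> (var v) = const (lam v) * var v" for v
    using lam(2)[of v] by (simp add: const_var)
  have br1: "\<phi> (bracket a b c 1 (const 1 * var v) (const 1 * var w))
     = bracket a' b' c' 1 (const (lam v) * var v) (const (lam w) * var w)" for v w
    using br[of 1 "var v" "var w"] by (simp add: const_one pvar)
  have L1: "bracket a b c 1 (const 1 * var E4) (const 1 * var E6)
      = sg (ee E4 + ee E4 + ee E4) (-2) + sg (ee E6 + ee E6) 2"
    apply (subst bracket1, simp, simp)
    apply (simp add: K_def Sgen_def mweight_def mindex_def lookup_single)
    apply (simp add: const_def var_def mult_single add.assoc del: single_numeral)
    done
  have L2: "bracket a b c 1 (const 1 * var E4) (const 1 * var GA)
      = sg (ee E4 + ee GB) (4 * a) + sg (ee E6 + ee GA) (- ((2 - c) / 3))"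
    apply (subst bracket1, simp, simp)
    apply (simp add: K_def Sgen_def mweight_def mindex_def lookup_single)
    apply (simp add: const_def var_def mult_single add.assoc del: single_numeral)
    done
  have L3: "bracket a b c 1 (const 1 * var E4) (const 1 * var GB)
      = sg (ee E4 + ee E4 + ee GA) (4 * b) + sg (ee E6 + ee GB) (c / 3)"
    apply (subst bracket1, simp, simp)
    apply (simp add: K_def Sgen_def mweight_def mindex_def lookup_single)
    apply (simp add: const_def var_def mult_single add.assoc del: single_numeral)
    done
  have p4B: "\<phi> (sg (ee E4 + ee GB) 1) = sg (ee E4 + ee GB) (lam E4 * lam GB)"
    by (rule mult[OF pv pv lam(1) lam(1)])
  have p6A: "\<phi> (sg (ee E6 + ee GA) 1) = sg (ee E6 + ee GA) (lam E6 * lam GA)"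
    by (rule mult[OF pv pv lam(1) lam(1)])
  have p6B: "\<phi> (sg (ee E6 + ee GB) 1) = sg (ee E6 + ee GB) (lam E6 * lam GB)"
    by (rule mult[OF pv pv lam(1) lam(1)])
  have p44A: "\<phi> (sg (ee E4 + ee E4 + ee GA) 1) = sg (ee E4 + ee E4 + ee GA) (lam E4 * lam E4 * lam GA)"
    by (rule mult[OF p44 pv]) (use lam(1) in auto)
  have E1: "const (-2) * sg (ee E4 + ee E4 + ee E4) (lam E4 * lam E4 * lam E4)
     + const 2 * sg (ee E6 + ee E6) (lam E6 * lam E6)
     = bracket a' b' c' 1 (const (lam E4) * var E4) (const (lam E6) * var E6)"
    using br1[of E4 E6] unfolding L1 add phs[of _ "-2"] phs[of _ 2] p444 p66 .
  have E2: "const (4 * a) * sg (ee E4 + ee GB) (lam E4 * lam GB)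
     + const (- ((2 - c) / 3)) * sg (ee E6 + ee GA) (lam E6 * lam GA)
     = bracket a' b' c' 1 (const (lam E4) * var E4) (const (lam GA) * var GA)"
    using br1[of E4 GA] unfolding L2 add phs[of _ "4 * a"] phs[of _ "- ((2 - c) / 3)"] p4B p6A .
  have E3: "const (4 * b) * sg (ee E4 + ee E4 + ee GA) (lam E4 * lam E4 * lam GA)
     + const (c / 3) * sg (ee E6 + ee GB) (lam E6 * lam GB)
     = bracket a' b' c' 1 (const (lam E4) * var E4) (const (lam GB) * var GB)"
    using br1[of E4 GB] unfolding L3 add phs[of _ "4 * b"] phs[of _ "c / 3"] p44A p6B .
  note ev = K_def Sgen_def mweight_def mindex_def
     const_def var_def mult_single lookup_add lookup_single when_def mon_eq lam(1)
  have q1: "lam E4 * lam E4 * lam E4 = lam E4 * lam E6"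
    using arg_cong[OF E1[unfolded bracket1[OF lam(1) lam(1)]], of "\<lambda>x. Poly_Mapping.lookup x (ee E4 + ee E4 + ee E4)"]
    by (simp add: ev del: single_numeral)
  have q2: "lam E6 * lam E6 = lam E4 * lam E6"
    using arg_cong[OF E1[unfolded bracket1[OF lam(1) lam(1)]], of "\<lambda>x. Poly_Mapping.lookup x (ee E6 + ee E6)"]
    by (simp add: ev del: single_numeral)
  have q3: "a * lam GB = lam GA * a'"
    using arg_cong[OF E2[unfolded bracket1[OF lam(1) lam(1)]], of "\<lambda>x. Poly_Mapping.lookup x (ee E4 + ee GB)"]
    by (simp add: ev del: single_numeral)
  have q4: "(2 - c) * lam E6 = (2 - c') * lam E4"
    using arg_cong[OF E2[unfolded bracket1[OF lam(1) lam(1)]], of "\<lambda>x. Poly_Mapping.lookup x (ee E6 + ee GA)"]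
    by (simp add: ev del: single_numeral)
  have q5: "b * (lam E4 * lam GA) = lam GB * b'"
    using arg_cong[OF E3[unfolded bracket1[OF lam(1) lam(1)]], of "\<lambda>x. Poly_Mapping.lookup x (ee E4 + ee E4 + ee GA)"]
    by (simp add: ev del: single_numeral)
  have l6: "lam E6 = lam E4" using q2 lam(1)[of E6] by simp
  have "lam E4 * lam E4 * (lam E4 - 1) = 0" using q1 unfolding l6 by (simp add: algebra_simps)
  then have l4: "lam E4 = 1" using lam(1)[of E4] by simp
  have cc: "c = c'" using q4 unfolding l6 l4 by simp
  have bb: "b * lam GA = lam GB * b'" using q5 unfolding l4 by simp
  show ?thesis
  proof (intro conjI exI)
    show "c = c'" by (rule cc)
    show "lam GB / lam GA \<noteq> 0" using lam(1) by simp
    show "a' = lam GB / lam GA * a" using q3 lam(1)[of GA] by (simp add: field_simps)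
    show "b' = inverse (lam GB / lam GA) * b" using bb lam(1)[of GB] by (simp add: field_simps)
  qed
qed

end
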